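(* Let $D=\{z\in\mathbb{C}:|z|<1\}$, $\mathbb{T}=\partial D$, and let $A_0(\hat{\mathbb{C}}\setminus\overline{D})$ be the space of functions $f:\{z\in\mathbb{C}:|z|\ge 1\}\to\mathbb{C}$ that are continuous on $\{|z|\ge1\}$, holomorphic on $\{|z|>1\}$ and satisfy $\lim_{z\to\infty}f(z)=0$, endowed with the topology of uniform convergence on compact subsets of $\{z\in\mathbb{C}:|z|\ge1\}$. Then the set of functions $f\in A_0(\hat{\mathbb{C}}\setminus\overline{D})$ such that $f\restriction_{\mathbb{T}}\in Z$ is a dense $G_\delta$ subset of $A_0(\hat{\mathbb{C}}\setminus\overline{D})$.
   Context: A function $g$ on $\mathbb{T}$ is identified with the $2\pi$-periodic function $y\mapsto g(e^{iy})$ on $\mathbb{R}$, and one writes $g(y)$ for $g(e^{iy})$. The class $Z$ consists of all continuous $f:\mathbb{T}\to\mathbb{C}$ such that for every $\theta\in\mathbb{R}$ $$\limsup_{y\to\theta^+}\left|\frac{\operatorname{Re}f(y)-\operatorname{Re}f(\theta)}{y-\theta}\right|=+\infty\quad\text{and}\quad \limsup_{y\to\theta^+}\left|\frac{\operatorname{Im}f(y)-\operatorname{Im}f(\theta)}{y-\theta}\right|=+\infty.$$ *)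

theory Defs
  imports "HOL-Analysis.Analysis"
begin

text \<open>A function on
  the closed set {z. 1 \<le> norm z} is represented by the function complex \<Rightarrow> complex
  that vanishes on the open unit disc (canonical representative).\<close>

definition A0 :: "(complex \<Rightarrow> complex) set" where
  "A0 = {f. continuous_on {z. 1 \<le> norm z} f \<and>
            f holomorphic_on {z. 1 < norm z} \<and>
            (f \<longlongrightarrow> 0) at_infinity \<and>
            (\<forall>z. norm z < 1 \<longrightarrow> f z = 0)}"

definition cc_open :: "(complex \<Rightarrow> complex) set \<Rightarrow> bool" where
  "cc_open U \<longleftrightarrow> U \<subseteq> A0 \<and>
     (\<forall>f\<in>U. \<exists>K e. compact K \<and> K \<subseteq> {z. 1 \<le> norm z} \<and> e > 0 \<and>
        {g\<in>A0. \<forall>z\<in>K. norm (g z - f z) < e} \<subseteq> U)"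

lemma istopology_cc_open: "istopology cc_open"
  unfolding istopology_def
proof (intro conjI allI impI)
  fix S T assume S: "cc_open S" and T: "cc_open T"
  show "cc_open (S \<inter> T)"
    unfolding cc_open_def
  proof (intro conjI ballI)
    show "S \<inter> T \<subseteq> A0" using S unfolding cc_open_def by blast
  next
    fix f assume f: "f \<in> S \<inter> T"
    obtain K1 e1 where 1: "compact K1" "K1 \<subseteq> {z. 1 \<le> norm z}" "e1 > 0"
      "{g\<in>A0. \<forall>z\<in>K1. norm (g z - f z) < e1} \<subseteq> S"
      using S f unfolding cc_open_def by (meson IntD1)
    obtain K2 e2 where 2: "compact K2" "K2 \<subseteq> {z. 1 \<le> norm z}" "e2 > 0"
      "{g\<in>A0. \<forall>z\<in>K2. norm (g z - f z) < e2} \<subseteq> T"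
      using T f unfolding cc_open_def by (meson IntD2)
    show "\<exists>K e. compact K \<and> K \<subseteq> {z. 1 \<le> norm z} \<and> e > 0 \<and>
        {g\<in>A0. \<forall>z\<in>K. norm (g z - f z) < e} \<subseteq> S \<inter> T"
    proof (intro exI conjI)
      show "compact (K1 \<union> K2)" using 1 2 by blast
      show "K1 \<union> K2 \<subseteq> {z. 1 \<le> norm z}" using 1 2 by blast
      show "min e1 e2 > 0" using 1 2 by simp
      show "{g\<in>A0. \<forall>z\<in>K1 \<union> K2. norm (g z - f z) < min e1 e2} \<subseteq> S \<inter> T"
        using 1(4) 2(4) by auto
    qed
  qed
next
  fix \<K> :: "(complex \<Rightarrow> complex) set set"
  assume "\<forall>K\<in>\<K>. cc_open K"
  then have H: "\<And>K. K \<in> \<K> \<Longrightarrow> cc_open K" by blast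
  show "cc_open (\<Union>\<K>)"
    unfolding cc_open_def
  proof (intro conjI ballI)
    show "\<Union>\<K> \<subseteq> A0" using H unfolding cc_open_def by blast
  next
    fix f assume "f \<in> \<Union>\<K>"
    then obtain U where U: "U \<in> \<K>" "f \<in> U" by blast
    then obtain K e where Ke: "compact K" "K \<subseteq> {z. 1 \<le> norm z}" "e > 0"
        "{g\<in>A0. \<forall>z\<in>K. norm (g z - f z) < e} \<subseteq> U"
      using H[OF U(1)] unfolding cc_open_def by meson
    show "\<exists>K e. compact K \<and> K \<subseteq> {z. 1 \<le> norm z} \<and> e > 0 \<and>
        {g\<in>A0. \<forall>z\<in>K. norm (g z - f z) < e} \<subseteq> \<Union>\<K>"
      using Ke U(1) by blast
  qed
qed

definition cc_topology :: "(complex \<Rightarrow> complex) topology" where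
  "cc_topology = topology cc_open"

lemma openin_cc_topology: "openin cc_topology = cc_open"
  unfolding cc_topology_def using istopology_cc_open by simp

definition classZ :: "(complex \<Rightarrow> complex) \<Rightarrow> bool" where
  "classZ f \<longleftrightarrow> continuous_on (sphere 0 1) f \<and>
     (\<forall>\<theta>::real.
        Limsup (at_right \<theta>) (\<lambda>y. ereal \<bar>(Re (f (exp (\<i> * of_real y))) - Re (f (exp (\<i> * of_real \<theta>)))) / (y - \<theta>)\<bar>) = \<infinity> \<and>
        Limsup (at_right \<theta>) (\<lambda>y. ereal \<bar>(Im (f (exp (\<i> * of_real y))) - Im (f (exp (\<i> * of_real \<theta>)))) / (y - \<theta>)\<bar>) = \<infinity>)"

end

theory Submission
  imports Defs "HOL-Complex_Analysis.Complex_Analysis"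
begin

definition Zpt :: "(real \<Rightarrow> real) \<Rightarrow> real \<Rightarrow> bool" where
  "Zpt w \<theta> \<longleftrightarrow> (\<forall>M \<delta>. \<delta> > 0 \<longrightarrow> (\<exists>y. \<theta> < y \<and> y < \<theta> + \<delta> \<and> M * (y - \<theta>) < \<bar>w y - w \<theta>\<bar>))"

lemma Limsup_Zpt:
  "Limsup (at_right \<theta>) (\<lambda>y. ereal \<bar>(w y - w \<theta>) / (y - \<theta>)\<bar>) = \<infinity> \<longleftrightarrow> Zpt w \<theta>"
  (is "?L = _ \<longleftrightarrow> _")
proof
  assume L: "?L = \<infinity>"
  show "Zpt w \<theta>" unfolding Zpt_def
  proof (intro allI impI)
    fix M \<delta> :: real assume d: "\<delta> > 0"
    have "\<not> ?L \<le> ereal M" using L by simp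
    then obtain y' where y': "y' > ereal M" and ne: "\<not> eventually (\<lambda>y. y' > ereal \<bar>(w y - w \<theta>) / (y - \<theta>)\<bar>) (at_right \<theta>)"
      unfolding Limsup_le_iff by blast
    from ne have "\<not> (\<forall>y>\<theta>. y < \<theta> + \<delta> \<longrightarrow> y' > ereal \<bar>(w y - w \<theta>) / (y - \<theta>)\<bar>)"
    proof -
      have "\<theta> < \<theta> + \<delta>" using d by simp
      then show ?thesis using ne unfolding eventually_at_right_field by blast
    qed
    then obtain y where y: "\<theta> < y" "y < \<theta> + \<delta>" "y' \<le> ereal \<bar>(w y - w \<theta>) / (y - \<theta>)\<bar>"
      by (auto simp: not_less)
    have "ereal M < ereal \<bar>(w y - w \<theta>) / (y - \<theta>)\<bar>" by (rule less_le_trans[OF y' y(3)])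
    then have "M < \<bar>(w y - w \<theta>) / (y - \<theta>)\<bar>" by simp
    also have "\<dots> = \<bar>w y - w \<theta>\<bar> / (y - \<theta>)" using y(1) by (simp add: abs_div)
    finally have "M * (y - \<theta>) < \<bar>w y - w \<theta>\<bar>" using y(1) by (simp add: pos_less_divide_eq)
    then show "\<exists>y. \<theta> < y \<and> y < \<theta> + \<delta> \<and> M * (y - \<theta>) < \<bar>w y - w \<theta>\<bar>" using y by blast
  qed
next
  assume Z: "Zpt w \<theta>"
  show "?L = \<infinity>"
  proof (rule ccontr)
    assume "?L \<noteq> \<infinity>"
    then obtain c where c: "?L \<le> ereal c"
    proof (cases ?L rule: ereal_cases)
      case (real r) then show ?thesis using that[of r] by simp
    next
      case MInf then show ?thesis using that[of 0] by simp
    qed simp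
    then have "eventually (\<lambda>y. ereal (c+1) > ereal \<bar>(w y - w \<theta>) / (y - \<theta>)\<bar>) (at_right \<theta>)"
    proof -
      have "ereal c < ereal (c + 1)" by simp
      then show ?thesis using c unfolding Limsup_le_iff by blast
    qed
    then obtain b where b: "b > \<theta>" "\<And>y. y > \<theta> \<Longrightarrow> y < b \<Longrightarrow> c + 1 > \<bar>(w y - w \<theta>) / (y - \<theta>)\<bar>"
      unfolding eventually_at_right_field by auto
    obtain y where y: "\<theta> < y" "y < \<theta> + (b - \<theta>)" "(c+1) * (y - \<theta>) < \<bar>w y - w \<theta>\<bar>"
      using Z b(1) unfolding Zpt_def by (meson diff_gt_0_iff_gt)
    have "\<bar>(w y - w \<theta>) / (y - \<theta>)\<bar> = \<bar>w y - w \<theta>\<bar> / (y - \<theta>)" using y(1) by (simp add: abs_div)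
    moreover have "c + 1 < \<bar>w y - w \<theta>\<bar> / (y - \<theta>)" using y by (simp add: pos_less_divide_eq)
    ultimately show False using b(2)[of y] y by simp
  qed
qed


lemma lip_cos: "\<bar>cos a - cos b\<bar> \<le> \<bar>a - b\<bar>" for a b :: real
proof -
  have e: "\<bar>cos a - cos b\<bar> = 2 * (\<bar>sin ((a + b) / 2)\<bar> * \<bar>sin ((b - a) / 2)\<bar>)"
    by (simp add: cos_diff_cos abs_mult)
  have "\<bar>sin ((a + b) / 2)\<bar> * \<bar>sin ((b - a) / 2)\<bar> \<le> 1 * \<bar>sin ((b - a) / 2)\<bar>"
    by (rule mult_right_mono[OF abs_sin_le_one abs_ge_zero])
  moreover have "\<bar>sin ((b - a) / 2)\<bar> \<le> \<bar>(b - a) / 2\<bar>" by (rule abs_sin_x_le_abs_x)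
  moreover have "\<bar>(b - a) / 2\<bar> = \<bar>a - b\<bar> / 2" "\<bar>(a - b) / 2\<bar> = \<bar>a - b\<bar> / 2" by auto
  ultimately show ?thesis unfolding e by linarith
qed

lemma lip_sin: "\<bar>sin a - sin b\<bar> \<le> \<bar>a - b\<bar>" for a b :: real
proof -
  have e: "\<bar>sin a - sin b\<bar> = 2 * (\<bar>sin ((a - b) / 2)\<bar> * \<bar>cos ((a + b) / 2)\<bar>)"
    by (simp add: sin_diff_sin abs_mult)
  have "\<bar>sin ((a - b) / 2)\<bar> * \<bar>cos ((a + b) / 2)\<bar> \<le> \<bar>sin ((a - b) / 2)\<bar> * 1"
    by (rule mult_left_mono[OF abs_cos_le_one abs_ge_zero])
  moreover have "\<bar>sin ((a - b) / 2)\<bar> \<le> \<bar>(a - b) / 2\<bar>" by (rule abs_sin_x_le_abs_x)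
  moreover have "\<bar>(b - a) / 2\<bar> = \<bar>a - b\<bar> / 2" "\<bar>(a - b) / 2\<bar> = \<bar>a - b\<bar> / 2" by auto
  ultimately show ?thesis unfolding e by linarith
qed

lemma one_of_two: "(s + c)^2 + (s - c)^2 = (2::real) \<Longrightarrow> 1 \<le> \<bar>s + c\<bar> \<or> 1 \<le> \<bar>s - c\<bar>"
proof (rule ccontr)
  assume h: "(s + c)^2 + (s - c)^2 = 2" "\<not> (1 \<le> \<bar>s + c\<bar> \<or> 1 \<le> \<bar>s - c\<bar>)"
  then have "\<bar>s + c\<bar> < 1" "\<bar>s - c\<bar> < 1" by auto
  then have "(s + c)^2 < 1" "(s - c)^2 < 1"
    by (simp_all add: abs_square_less_1)
  then show False using h(1) by simp
qed

lemma cos_3pi2: "cos (3 * pi / 2) = 0" and sin_3pi2: "sin (3 * pi / 2) = -1"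
proof -
  have e: "3 * pi / 2 = pi / 2 + pi" by simp
  show "cos (3 * pi / 2) = 0" by (subst e, subst cos_add) simp
  show "sin (3 * pi / 2) = -1" by (subst e, subst sin_add) simp
qed

lemma step_cos: "\<exists>\<sigma>. 0 < \<sigma> \<and> \<sigma> \<le> 6 \<and> 1 \<le> \<bar>cos (t + \<sigma>) - cos t\<bar>" for t :: real
proof -
  have 1: "cos (t + pi/2) = - sin t" by (simp add: cos_add)
  have 2: "cos (t + 3*pi/2) = sin t" by (simp add: cos_add cos_3pi2 sin_3pi2)
  have e1: "\<bar>cos (t + pi/2) - cos t\<bar> = \<bar>sin t + cos t\<bar>" unfolding 1 by arith
  have e2: "\<bar>cos (t + 3*pi/2) - cos t\<bar> = \<bar>sin t - cos t\<bar>" unfolding 2 by arith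
  have "(sin t + cos t)^2 + (sin t - cos t)^2 = 2"
    using sin_cos_squared_add[of t] by (simp add: power2_eq_square algebra_simps)
  then have "1 \<le> \<bar>sin t + cos t\<bar> \<or> 1 \<le> \<bar>sin t - cos t\<bar>" by (rule one_of_two)
  moreover have "pi/2 \<le> 6" "3*pi/2 \<le> 6" using pi_less_4 by auto
  moreover have "0 < pi/2" "0 < 3*pi/2" by auto
  ultimately show ?thesis
  proof (elim disjE)
    assume "1 \<le> \<bar>sin t + cos t\<bar>"
    then show ?thesis using e1 \<open>pi/2 \<le> 6\<close> \<open>0 < pi/2\<close> by (intro exI[of _ "pi/2"] conjI) (assumption | subst e1, assumption)+
  next
    assume "1 \<le> \<bar>sin t - cos t\<bar>"
    then show ?thesis using e2 \<open>3*pi/2 \<le> 6\<close> \<open>0 < 3*pi/2\<close> by (intro exI[of _ "3*pi/2"] conjI) (assumption | subst e2, assumption)+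
  qed
qed

lemma step_sin: "\<exists>\<sigma>. 0 < \<sigma> \<and> \<sigma> \<le> 6 \<and> 1 \<le> \<bar>sin (t + \<sigma>) - sin t\<bar>" for t :: real
proof -
  have 1: "sin (t + pi/2) = cos t" by (simp add: sin_add)
  have 2: "sin (t + 3*pi/2) = - cos t" by (simp add: sin_add cos_3pi2 sin_3pi2)
  have e1: "\<bar>sin (t + 3*pi/2) - sin t\<bar> = \<bar>sin t + cos t\<bar>" unfolding 2 by arith
  have e2: "\<bar>sin (t + pi/2) - sin t\<bar> = \<bar>sin t - cos t\<bar>" unfolding 1 by arith
  have "(sin t + cos t)^2 + (sin t - cos t)^2 = 2"
    using sin_cos_squared_add[of t] by (simp add: power2_eq_square algebra_simps)
  then have "1 \<le> \<bar>sin t + cos t\<bar> \<or> 1 \<le> \<bar>sin t - cos t\<bar>" by (rule one_of_two)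
  moreover have "pi/2 \<le> 6" "3*pi/2 \<le> 6" using pi_less_4 by auto
  moreover have "0 < pi/2" "0 < 3*pi/2" by auto
  ultimately show ?thesis
  proof (elim disjE)
    assume "1 \<le> \<bar>sin t + cos t\<bar>"
    then show ?thesis using e1 \<open>3*pi/2 \<le> 6\<close> \<open>0 < 3*pi/2\<close> by (intro exI[of _ "3*pi/2"] conjI) (assumption | subst e1, assumption)+
  next
    assume "1 \<le> \<bar>sin t - cos t\<bar>"
    then show ?thesis using e2 \<open>pi/2 \<le> 6\<close> \<open>0 < pi/2\<close> by (intro exI[of _ "pi/2"] conjI) (assumption | subst e2, assumption)+
  qed
qed


lemma geo64_sum: "(\<Sum>i<n. (64::real)^i) \<le> 64^n / 30"
proof (induction n)
  case 0 then show ?case by simp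
next
  case (Suc n)
  have "(0::real) \<le> 64^n" by simp
  then show ?case using Suc by (simp; linarith)
qed

lemma lacunary:
  fixes \<phi> :: "real \<Rightarrow> real"
  assumes lip: "\<And>a b. \<bar>\<phi> a - \<phi> b\<bar> \<le> \<bar>a - b\<bar>" and bnd: "\<And>a. \<bar>\<phi> a\<bar> \<le> 1"
    and step: "\<And>t. \<exists>\<sigma>. 0 < \<sigma> \<and> \<sigma> \<le> 6 \<and> 1 \<le> \<bar>\<phi> (t + \<sigma>) - \<phi> t\<bar>"
  shows "Zpt (\<lambda>y. \<Sum>k. (1/4)^k * \<phi> (256^k * y)) \<theta>"
  unfolding Zpt_def
proof (intro allI impI)
  fix M \<delta> :: real assume d0: "0 < \<delta>"
  have summ: "summable (\<lambda>k. (1/4::real)^k * \<phi> (256^k * x))" for x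
  proof (rule summable_comparison_test'[where N=0])
    show "summable (\<lambda>k. (1/4::real)^k)" by (rule summable_geometric) simp
    show "norm ((1/4::real)^k * \<phi> (256^k * x)) \<le> (1/4)^k" for k
      using bnd[of "256^k * x"] by (simp add: abs_mult mult_left_le)
  qed
  obtain n where n: "max (45 * M) (6 / \<delta>) < 64^n"
    using real_arch_pow[of "64::real" "max (45 * M) (6 / \<delta>)"] by auto
  define P where "P = (64::real)^n"
  define Q where "Q = (1/4::real)^n"
  define R where "R = (256::real)^n"
  have RP: "P \<le> R" unfolding P_def R_def by (intro power_mono) auto
  have P0: "0 < P" unfolding P_def by simp
  have QR: "Q * R = P" unfolding P_def Q_def R_def by (simp add: power_mult_distrib[symmetric])
  obtain \<sigma> where s: "0 < \<sigma>" "\<sigma> \<le> 6" "1 \<le> \<bar>\<phi> (R * \<theta> + \<sigma>) - \<phi> (R * \<theta>)\<bar>"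
    using step by blast
  define y where "y = \<theta> + \<sigma> / R"
  have R0: "0 < R" using RP P0 by simp
  have X0: "0 < y - \<theta>" unfolding y_def using s R0 by simp
  have X6: "R * (y - \<theta>) \<le> 6" unfolding y_def using s R0 by simp
  have "6 / \<delta> < P" using n unfolding P_def by simp
  then have "6 < P * \<delta>" using d0 by (simp add: divide_less_eq)
  then have "6 < R * \<delta>" using RP d0 by (smt (verit) mult_right_mono)
  then have "R * (y - \<theta>) < R * \<delta>" using X6 by simp
  then have yd: "y < \<theta> + \<delta>" using R0 by simp
  have Ry: "R * y = R * \<theta> + \<sigma>" unfolding y_def using R0 by (simp add: field_simps)
  define d where "d k = (1/4::real)^k * (\<phi> (256^k * y) - \<phi> (256^k * \<theta>))" for k
  have sd: "(\<Sum>k. (1/4::real)^k * \<phi> (256^k * y)) - (\<Sum>k. (1/4)^k * \<phi> (256^k * \<theta>)) = suminf d"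
    unfolding d_def by (simp add: suminf_diff[OF summ summ] right_diff_distrib)
  have sumd: "summable d"
    unfolding d_def using summable_diff[OF summ[of y] summ[of \<theta>]] by (simp add: right_diff_distrib)
  have split: "suminf d = (\<Sum>j. d (j + Suc n)) + (\<Sum>i<n. d i) + d n"
    using suminf_split_initial_segment[OF sumd, of "Suc n"] by simp
  have dn: "1 * Q \<le> \<bar>d n\<bar>"
    unfolding d_def Q_def using s(3) Ry unfolding R_def by (simp add: abs_mult)
  have dk: "\<bar>d k\<bar> \<le> 64^k * (y - \<theta>)" for k
  proof -
    have "\<bar>d k\<bar> = (1/4)^k * \<bar>\<phi> (256^k * y) - \<phi> (256^k * \<theta>)\<bar>" unfolding d_def by (simp add: abs_mult)
    also have "\<dots> \<le> (1/4)^k * \<bar>256^k * y - 256^k * \<theta>\<bar>" by (intro mult_left_mono lip) simp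
    also have "\<bar>256^k * y - 256^k * \<theta>\<bar> = 256^k * (y - \<theta>)" using X0 by (simp add: right_diff_distrib[symmetric] abs_mult)
    also have "(1/4::real)^k * (256^k * (y - \<theta>)) = 64^k * (y - \<theta>)"
      by (simp add: mult.assoc[symmetric] power_mult_distrib[symmetric])
    finally show ?thesis .
  qed
  have A: "\<bar>\<Sum>i<n. d i\<bar> \<le> P * (y - \<theta>) / 30"
  proof -
    have "\<bar>\<Sum>i<n. d i\<bar> \<le> (\<Sum>i<n. \<bar>d i\<bar>)" by (rule sum_abs)
    also have "\<dots> \<le> (\<Sum>i<n. 64^i * (y - \<theta>))" by (intro sum_mono dk)
    also have "\<dots> = (\<Sum>i<n. 64^i) * (y - \<theta>)" by (simp add: sum_distrib_right)
    also have "\<dots> \<le> (64^n / 30) * (y - \<theta>)" using X0 geo64_sum by (intro mult_right_mono) auto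
    finally show ?thesis unfolding P_def by simp
  qed
  have dk2: "\<bar>d k\<bar> \<le> 2 * (1/4)^k" for k
  proof -
    have "\<bar>\<phi> (256^k * y) - \<phi> (256^k * \<theta>)\<bar> \<le> 2"
      using bnd[of "256^k * y"] bnd[of "256^k * \<theta>"] by arith
    then show ?thesis unfolding d_def by (simp add: abs_mult mult_left_le)
  qed
  have C: "\<bar>\<Sum>j. d (j + Suc n)\<bar> \<le> 2 / 3 * Q"
  proof -
    have g: "summable (\<lambda>j. (1/4::real)^j)" by (rule summable_geometric) simp
    have dk3: "\<bar>d (j + Suc n)\<bar> \<le> 2 * (1/4)^Suc n * (1/4::real)^j" for j
    proof -
      have "(1/4::real)^(j + Suc n) = (1/4)^Suc n * (1/4)^j" by (simp add: power_add)
      then show ?thesis using dk2[of "j + Suc n"] by (simp add: mult_ac)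
    qed
    have s1: "summable (\<lambda>j. \<bar>d (j + Suc n)\<bar>)"
      by (rule summable_comparison_test'[where N=0, OF summable_mult[OF g, of "2 * (1/4)^Suc n"]])
         (use dk3 in simp)
    have "\<bar>\<Sum>j. d (j + Suc n)\<bar> \<le> (\<Sum>j. \<bar>d (j + Suc n)\<bar>)"
      using summable_norm[of "\<lambda>j. d (j + Suc n)"] s1 by simp
    also have "\<dots> \<le> (\<Sum>j. 2 * (1/4)^Suc n * (1/4)^j)"
      by (rule suminf_le[OF dk3 s1 summable_mult[OF g]])
    also have "\<dots> = 2 * (1/4)^Suc n * (\<Sum>j. (1/4::real)^j)" by (rule suminf_mult[OF g])
    also have "(\<Sum>j. (1/4::real)^j) = 4/3" by (subst suminf_geometric) simp_all
    finally show ?thesis unfolding Q_def by simp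
  qed
  have QX: "P * (y - \<theta>) \<le> 6 * Q"
  proof -
    have "P * (y - \<theta>) = Q * (R * (y - \<theta>))" using QR by (simp add: mult.assoc[symmetric])
    also have "\<dots> \<le> Q * 6" using X6 by (intro mult_left_mono) (auto simp: Q_def)
    finally show ?thesis by simp
  qed
  have main: "P * (y - \<theta>) / 45 \<le> \<bar>suminf d\<bar>"
    using split A C dn QX by arith
  have "M * (y - \<theta>) < P / 45 * (y - \<theta>)"
    using n X0 unfolding P_def by (intro mult_strict_right_mono) auto
  then have "M * (y - \<theta>) < \<bar>suminf d\<bar>" using main by simp
  then show "\<exists>y'. \<theta> < y' \<and> y' < \<theta> + \<delta> \<and> M * (y' - \<theta>) <
      \<bar>(\<Sum>k. (1/4)^k * \<phi> (256^k * y')) - (\<Sum>k. (1/4)^k * \<phi> (256^k * \<theta>))\<bar>"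
    using X0 yd sd by (intro exI[of _ y]) auto
qed


definition Pser :: "complex \<Rightarrow> complex" where
  "Pser w = (\<Sum>k. of_real ((1/4)^k) * w ^ (256^k))"

definition hZ :: "complex \<Rightarrow> complex" where
  "hZ z = (if norm z < 1 then 0 else Pser (inverse z))"

lemma Pser_term_bound:
  fixes w :: complex
  assumes "norm w \<le> 1"
  shows "norm (of_real ((1/4::real)^k) * w ^ (256^k)) \<le> (1/4)^k * norm w"
proof -
  have "norm w ^ (256^k) \<le> norm w ^ 1"
    by (rule power_decreasing) (use assms in auto)
  then have "(1/4::real)^k * norm w ^ (256^k) \<le> (1/4)^k * norm w"
    by (intro mult_left_mono) auto
  then show ?thesis by (simp add: norm_mult norm_power norm_of_real)
qed

lemma Pser_summable:
  fixes w :: complex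
  assumes "norm w \<le> 1"
  shows "summable (\<lambda>k. of_real ((1/4::real)^k) * w ^ (256^k))"
proof (rule summable_comparison_test'[where N=0])
  show "summable (\<lambda>k. (1/4::real)^k * norm w)"
    by (rule summable_mult2) (rule summable_geometric, simp)
  show "norm (of_real ((1/4::real)^k) * w ^ (256^k)) \<le> (1/4)^k * norm w" for k
    by (rule Pser_term_bound[OF assms])
qed

lemma Pser_bound:
  fixes w :: complex
  assumes "norm w \<le> 1"
  shows "norm (Pser w) \<le> 4/3 * norm w"
proof -
  have g: "summable (\<lambda>k. (1/4::real)^k * norm w)"
    by (rule summable_mult2) (rule summable_geometric, simp)
  have sn: "summable (\<lambda>k. norm (of_real ((1/4::real)^k) * w ^ (256^k)))"
    by (rule summable_comparison_test'[where N=0, OF g]) (use Pser_term_bound[OF assms] in simp)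
  have "norm (Pser w) \<le> (\<Sum>k. norm (of_real ((1/4::real)^k) * w ^ (256^k)))"
    unfolding Pser_def by (rule summable_norm[OF sn])
  also have "\<dots> \<le> (\<Sum>k. (1/4::real)^k * norm w)"
    by (rule suminf_le[OF _ sn g]) (rule Pser_term_bound[OF assms])
  also have "\<dots> = (\<Sum>k. (1/4::real)^k) * norm w"
    by (rule suminf_mult2[symmetric]) (rule summable_geometric, simp)
  also have "(\<Sum>k. (1/4::real)^k) = 4/3" by (subst suminf_geometric) simp_all
  finally show ?thesis .
qed

lemma Pser_cont_holo:
  "continuous_on (cball 0 1) Pser" "Pser holomorphic_on ball 0 1"
proof -
  have ul: "uniform_limit (cball 0 1) (\<lambda>n (w::complex). \<Sum>i<n. of_real ((1/4::real)^i) * w ^ (256^i))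
      (\<lambda>w. \<Sum>i. of_real ((1/4::real)^i) * w ^ (256^i)) sequentially"
  proof (rule Weierstrass_m_test)
    show "norm (of_real ((1/4::real)^n) * x ^ (256^n)) \<le> (1/4)^n" if "x \<in> cball 0 1" for n and x :: complex
    proof -
      have "norm x \<le> 1" using that by simp
      then have "norm (of_real ((1/4::real)^n) * x ^ (256^n)) \<le> (1/4)^n * norm x" by (rule Pser_term_bound)
      also have "\<dots> \<le> (1/4)^n * 1" using \<open>norm x \<le> 1\<close> by (intro mult_left_mono) auto
      finally show ?thesis by simp
    qed
    show "summable (\<lambda>n. (1/4::real)^n)" by (rule summable_geometric) simp
  qed
  have eq: "(\<lambda>w::complex. \<Sum>i. of_real ((1/4::real)^i) * w ^ (256^i)) = Pser"
    by (rule ext) (simp add: Pser_def)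
  have "\<forall>\<^sub>F n in sequentially. continuous_on (cball 0 1) (\<lambda>w::complex. \<Sum>i<n. of_real ((1/4::real)^i) * w ^ (256^i)) \<and>
        (\<lambda>w. \<Sum>i<n. of_real ((1/4::real)^i) * w ^ (256^i)) holomorphic_on ball 0 1"
  proof (intro always_eventually allI conjI)
    fix n
    show "continuous_on (cball 0 1) (\<lambda>w::complex. \<Sum>i<n. of_real ((1/4::real)^i) * w ^ (256^i))"
      by (intro continuous_intros)
    show "(\<lambda>w::complex. \<Sum>i<n. of_real ((1/4::real)^i) * w ^ (256^i)) holomorphic_on ball 0 1"
      by (intro holomorphic_intros)
  qed
  from holomorphic_uniform_limit[OF this ul[unfolded eq]]
  show "continuous_on (cball 0 1) Pser" "Pser holomorphic_on ball 0 1" by auto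
qed

lemma hZ_circle: "hZ (exp (\<i> * of_real y)) = (\<Sum>k. of_real ((1/4::real)^k) * exp (- (\<i> * of_real (256^k * y))))"
proof -
  have "norm (exp (\<i> * of_real y)) = 1" by simp
  then have "hZ (exp (\<i> * of_real y)) = Pser (exp (- (\<i> * of_real y)))"
    unfolding hZ_def by (simp add: exp_minus)
  also have "\<dots> = (\<Sum>k. of_real ((1/4::real)^k) * exp (- (\<i> * of_real (256^k * y))))"
    unfolding Pser_def
  proof (intro suminf_cong arg_cong2[where f="(*)"] refl)
    fix k :: nat
    have "exp (- (\<i> * of_real y)) ^ (256^k) = exp (of_nat (256^k) * (- (\<i> * of_real y)))"
      by (rule exp_of_nat_mult[symmetric])
    also have "of_nat (256^k) * (- (\<i> * of_real y)) = - (\<i> * of_real (256^k * y))"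
      by simp
    finally show "exp (- (\<i> * of_real y)) ^ (256^k) = exp (- (\<i> * of_real (256^k * y)))" .
  qed
  finally show ?thesis .
qed

lemma circle_summable: "summable (\<lambda>k. of_real ((1/4::real)^k) * exp (- (\<i> * of_real (256^k * y))))"
proof (rule summable_comparison_test'[where N=0])
  show "summable (\<lambda>k. (1/4::real)^k)" by (rule summable_geometric) simp
  show "norm (of_real ((1/4::real)^k) * exp (- (\<i> * of_real (256^k * y)))) \<le> (1/4)^k" for k
    by (simp add: norm_mult norm_power)
qed

lemma hZ_Re: "Re (hZ (exp (\<i> * of_real y))) = (\<Sum>k. (1/4)^k * cos (256^k * y))"
  unfolding hZ_circle bounded_linear.suminf[OF bounded_linear_Re circle_summable]
  by (simp add: Re_exp)

lemma hZ_Im: "Im (hZ (exp (\<i> * of_real y))) = (\<Sum>k. (1/4)^k * - sin (256^k * y))"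
  unfolding hZ_circle bounded_linear.suminf[OF bounded_linear_Im circle_summable]
  by (simp add: Im_exp)

lemma hZ_Zpt_Re: "Zpt (\<lambda>y. Re (hZ (exp (\<i> * of_real y)))) \<theta>"
  unfolding hZ_Re by (rule lacunary[of cos]) (auto simp: lip_cos step_cos)

lemma hZ_Zpt_Im: "Zpt (\<lambda>y. Im (hZ (exp (\<i> * of_real y)))) \<theta>"
proof -
  have "Zpt (\<lambda>y. \<Sum>k. (1/4)^k * (\<lambda>x. - sin x) (256^k * y)) \<theta>"
  proof (rule lacunary)
    show "\<bar>- sin a - - sin b\<bar> \<le> \<bar>a - b\<bar>" for a b :: real using lip_sin[of a b] by arith
    show "\<bar>- sin a\<bar> \<le> 1" for a :: real by simp
    show "\<exists>\<sigma>. 0 < \<sigma> \<and> \<sigma> \<le> 6 \<and> 1 \<le> \<bar>- sin (t + \<sigma>) - - sin t\<bar>" for t :: real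
    proof -
      obtain \<sigma> where "0 < \<sigma>" "\<sigma> \<le> 6" "1 \<le> \<bar>sin (t + \<sigma>) - sin t\<bar>" using step_sin[of t] by blast
      moreover have "\<bar>- sin (t + \<sigma>) - - sin t\<bar> = \<bar>sin (t + \<sigma>) - sin t\<bar>" by arith
      ultimately show ?thesis by auto
    qed
  qed
  then show ?thesis unfolding hZ_Im by simp
qed


lemma hZ_A0: "hZ \<in> A0"
proof -
  let ?S = "{z::complex. 1 \<le> norm z}" and ?T = "{z::complex. 1 < norm z}"
  have inv_S: "inverse ` ?S \<subseteq> cball 0 1"
    by (auto simp: norm_inverse inverse_le_1_iff)
  have inv_T: "inverse ` ?T \<subseteq> ball 0 1"
    by (auto simp: norm_inverse inverse_less_1_iff)
  have "continuous_on ?S (\<lambda>z. Pser (inverse z))"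
    by (rule continuous_on_compose2[OF Pser_cont_holo(1) _ inv_S]) (auto intro!: continuous_intros)
  moreover have "continuous_on ?S (\<lambda>z. Pser (inverse z)) = continuous_on ?S hZ"
    by (rule continuous_on_cong) (auto simp: hZ_def)
  ultimately have c: "continuous_on ?S hZ" by simp
  have "(Pser \<circ> inverse) holomorphic_on ?T"
    by (rule holomorphic_on_compose_gen[OF _ Pser_cont_holo(2) inv_T]) (auto intro!: holomorphic_intros)
  then have hol: "hZ holomorphic_on ?T"
    by (rule holomorphic_transform) (auto simp: hZ_def)
  have lim: "(hZ \<longlongrightarrow> 0) at_infinity"
    unfolding Lim_at_infinity
  proof (intro allI impI)
    fix e :: real assume e: "0 < e"
    show "\<exists>b. \<forall>x. b \<le> norm x \<longrightarrow> dist (hZ x) 0 < e"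
    proof (intro exI[of _ "max 1 (2 / e)"] allI impI)
      fix x :: complex assume x: "max 1 (2 / e) \<le> norm x"
      then have x1: "1 \<le> norm x" and x2: "2 / e \<le> norm x" by auto
      have ni: "norm (inverse x) \<le> 1" using x1 by (simp add: norm_inverse inverse_le_1_iff)
      have "norm (hZ x) = norm (Pser (inverse x))" using x1 by (simp add: hZ_def)
      also have "\<dots> \<le> 4/3 * norm (inverse x)" by (rule Pser_bound[OF ni])
      also have "norm (inverse x) \<le> e / 2"
      proof -
        have "0 < norm x" using x1 by linarith
        then have "2 \<le> e * norm x" using x2 e by (simp add: divide_le_eq mult.commute)
        have "norm (inverse x) = 1 / norm x" by (simp add: norm_inverse divide_inverse)
        also have "1 / norm x \<le> e / 2" using \<open>0 < norm x\<close> \<open>2 \<le> e * norm x\<close>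
          by (simp add: divide_le_eq le_divide_eq mult.commute)
        finally show ?thesis .
      qed
      finally show "dist (hZ x) 0 < e" using e by simp
    qed
  qed
  show ?thesis unfolding A0_def using c hol lim by (auto simp: hZ_def)
qed

lemma A0_comb:
  assumes "f \<in> A0" "g \<in> A0"
  shows "(\<lambda>z. f z + of_real c * g z) \<in> A0"
  using assms unfolding A0_def
  by (auto intro!: continuous_intros holomorphic_intros tendsto_eq_intros)

lemma A0_dilate:
  assumes f: "f \<in> A0" and r: "1 \<le> r"
  shows "(\<lambda>z. if norm z < 1 then 0 else f (of_real r * z)) \<in> A0"
proof -
  let ?S = "{z::complex. 1 \<le> norm z}" and ?T = "{z::complex. 1 < norm z}"
  have fc: "continuous_on ?S f" and fh: "f holomorphic_on ?T" and fl: "(f \<longlongrightarrow> 0) at_infinity"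
    using f unfolding A0_def by auto
  have nr: "norm (of_real r * z) = r * norm z" for z :: complex using r by (simp add: norm_mult)
  have imS: "(\<lambda>z. of_real r * z) ` ?S \<subseteq> ?S"
  proof
    fix w assume "w \<in> (\<lambda>z. of_real r * z) ` ?S"
    then obtain z where z: "1 \<le> norm z" "w = of_real r * z" by auto
    have "1 * 1 \<le> r * norm z" using z r by (intro mult_mono) auto
    then show "w \<in> ?S" using z nr by simp
  qed
  have imT: "(\<lambda>z. of_real r * z) ` ?T \<subseteq> ?T"
  proof
    fix w assume "w \<in> (\<lambda>z. of_real r * z) ` ?T"
    then obtain z where z: "1 < norm z" "w = of_real r * z" by auto
    have "1 * 1 < r * norm z" using z r by (intro mult_le_less_imp_less) auto
    then show "w \<in> ?T" using z nr by simp
  qed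
  have "continuous_on ?S (\<lambda>z. f (of_real r * z))"
    by (rule continuous_on_compose2[OF fc _ imS]) (auto intro!: continuous_intros)
  moreover have "continuous_on ?S (\<lambda>z. f (of_real r * z)) =
      continuous_on ?S (\<lambda>z. if norm z < 1 then 0 else f (of_real r * z))"
    by (rule continuous_on_cong) auto
  ultimately have c: "continuous_on ?S (\<lambda>z. if norm z < 1 then 0 else f (of_real r * z))" by simp
  have "(f \<circ> (\<lambda>z. of_real r * z)) holomorphic_on ?T"
    by (rule holomorphic_on_compose_gen[OF _ fh imT]) (auto intro!: holomorphic_intros)
  then have hol: "(\<lambda>z. if norm z < 1 then 0 else f (of_real r * z)) holomorphic_on ?T"
    by (rule holomorphic_transform) auto
  have lim: "((\<lambda>z. if norm z < 1 then 0 else f (of_real r * z)) \<longlongrightarrow> 0) at_infinity"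
    unfolding Lim_at_infinity
  proof (intro allI impI)
    fix e :: real assume e: "0 < e"
    obtain b where b: "\<And>x. b \<le> norm x \<Longrightarrow> dist (f x) 0 < e"
      using fl e unfolding Lim_at_infinity by blast
    show "\<exists>b. \<forall>x. b \<le> norm x \<longrightarrow> dist (if norm x < 1 then 0 else f (of_real r * x)) 0 < e"
    proof (intro exI[of _ "max 1 b"] allI impI)
      fix x :: complex assume x: "max 1 b \<le> norm x"
      have "1 * norm x \<le> r * norm x" using r by (intro mult_right_mono) auto
      then have "b \<le> norm (of_real r * x)" using x nr by simp
      then show "dist (if norm x < 1 then 0 else f (of_real r * x)) 0 < e" using b x by auto
    qed
  qed
  show ?thesis unfolding A0_def using c hol lim by auto
qed

lemma loc_lip:
  fixes F :: "complex \<Rightarrow> complex"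
  assumes "F field_differentiable at (of_real \<theta>)"
  shows "\<exists>C d. d > 0 \<and> (\<forall>y. \<bar>y - \<theta>\<bar> < d \<longrightarrow> norm (F (of_real y) - F (of_real \<theta>)) \<le> C * \<bar>y - \<theta>\<bar>)"
proof -
  obtain D where D: "(F has_field_derivative D) (at (of_real \<theta>))"
    using assms unfolding field_differentiable_def by blast
  then have "((\<lambda>z. (F z - F (of_real \<theta>)) / (z - of_real \<theta>)) \<longlongrightarrow> D) (at (of_real \<theta>))"
    unfolding has_field_derivative_iff .
  then have "eventually (\<lambda>z. dist ((F z - F (of_real \<theta>)) / (z - of_real \<theta>)) D < 1) (at (of_real \<theta>))"
    by (rule tendstoD) simp
  then obtain d where d: "d > 0" "\<And>z. z \<noteq> of_real \<theta> \<Longrightarrow> dist z (of_real \<theta>) < d \<Longrightarrow>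
      dist ((F z - F (of_real \<theta>)) / (z - of_real \<theta>)) D < 1"
    unfolding eventually_at by auto
  show ?thesis
  proof (intro exI conjI allI impI)
    show "d > 0" by (rule d(1))
    fix y :: real assume y: "\<bar>y - \<theta>\<bar> < d"
    show "norm (F (of_real y) - F (of_real \<theta>)) \<le> (norm D + 1) * \<bar>y - \<theta>\<bar>"
    proof (cases "y = \<theta>")
      case True then show ?thesis by simp
    next
      case False
      let ?z = "complex_of_real y" and ?x = "complex_of_real \<theta>"
      have nz: "?z - ?x \<noteq> 0" using False by simp
      have dz: "dist ?z ?x = \<bar>y - \<theta>\<bar>" by (simp add: dist_norm of_real_diff[symmetric] del: of_real_diff)
      have "dist ((F ?z - F ?x) / (?z - ?x)) D < 1" using d(2)[of ?z] False dz y by simp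
      moreover have "norm ((F ?z - F ?x) / (?z - ?x)) - norm D \<le> norm ((F ?z - F ?x) / (?z - ?x) - D)"
        by (rule norm_triangle_ineq2)
      ultimately have q: "norm ((F ?z - F ?x) / (?z - ?x)) \<le> norm D + 1"
        by (simp add: dist_norm)
      have "F ?z - F ?x = ((F ?z - F ?x) / (?z - ?x)) * (?z - ?x)" using nz by simp
      then have "norm (F ?z - F ?x) = norm ((F ?z - F ?x) / (?z - ?x)) * norm (?z - ?x)"
        by (simp add: norm_divide)
      also have "\<dots> \<le> (norm D + 1) * norm (?z - ?x)" by (intro mult_right_mono q) simp
      also have "norm (?z - ?x) = \<bar>y - \<theta>\<bar>" using dz by (simp add: dist_norm)
      finally show ?thesis .
    qed
  qed
qed

lemma Zpt_perturb:
  assumes Z: "Zpt w \<theta>" and c: "c > 0"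
    and L: "d > 0" "\<And>y. \<bar>y - \<theta>\<bar> < d \<Longrightarrow> \<bar>v y - v \<theta>\<bar> \<le> C * \<bar>y - \<theta>\<bar>"
  shows "Zpt (\<lambda>y. v y + c * w y) \<theta>"
  unfolding Zpt_def
proof (intro allI impI)
  fix M \<delta> :: real assume \<delta>: "\<delta> > 0"
  obtain y where y: "\<theta> < y" "y < \<theta> + min \<delta> d" "((\<bar>M\<bar> + \<bar>C\<bar>) / c) * (y - \<theta>) < \<bar>w y - w \<theta>\<bar>"
    using Z \<delta> L(1) unfolding Zpt_def by (metis min_less_iff_conj)
  have yd: "\<bar>y - \<theta>\<bar> < d" using y by simp
  have v: "\<bar>v y - v \<theta>\<bar> \<le> \<bar>C\<bar> * (y - \<theta>)"
    using L(2)[OF yd] y(1) by (smt (verit) abs_ge_self mult_right_mono)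
  have "(\<bar>M\<bar> + \<bar>C\<bar>) * (y - \<theta>) < c * \<bar>w y - w \<theta>\<bar>"
    using y(3) c by (simp add: field_simps)
  moreover have "M * (y - \<theta>) \<le> \<bar>M\<bar> * (y - \<theta>)" using y(1) by (intro mult_right_mono) auto
  moreover have "\<bar>c * (w y - w \<theta>)\<bar> = c * \<bar>w y - w \<theta>\<bar>" using c by (simp add: abs_mult)
  ultimately have "M * (y - \<theta>) < \<bar>(v y + c * w y) - (v \<theta> + c * w \<theta>)\<bar>"
    using v by (smt (verit) right_diff_distrib distrib_right)
  then show "\<exists>y. \<theta> < y \<and> y < \<theta> + \<delta> \<and> M * (y - \<theta>) < \<bar>(v y + c * w y) - (v \<theta> + c * w \<theta>)\<bar>"
    using y by (intro exI[of _ y]) auto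
qed

lemma Zpt_nat:
  "Zpt w \<theta> \<longleftrightarrow> (\<forall>M::nat. \<exists>y. \<theta> < y \<and> y < \<theta> + 1 / (real M + 1) \<and> real M * (y - \<theta>) < \<bar>w y - w \<theta>\<bar>)"
proof
  assume "Zpt w \<theta>" then show "\<forall>M::nat. \<exists>y. \<theta> < y \<and> y < \<theta> + 1 / (real M + 1) \<and> real M * (y - \<theta>) < \<bar>w y - w \<theta>\<bar>"
    unfolding Zpt_def by simp
next
  assume H: "\<forall>M::nat. \<exists>y. \<theta> < y \<and> y < \<theta> + 1 / (real M + 1) \<and> real M * (y - \<theta>) < \<bar>w y - w \<theta>\<bar>"
  show "Zpt w \<theta>" unfolding Zpt_def
  proof (intro allI impI)
    fix M' \<delta> :: real assume \<delta>: "\<delta> > 0"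
    obtain M :: nat where M: "max M' (1 / \<delta>) < real M" using reals_Archimedean2 by blast
    obtain y where y: "\<theta> < y" "y < \<theta> + 1 / (real M + 1)" "real M * (y - \<theta>) < \<bar>w y - w \<theta>\<bar>"
      using H by blast
    have "1 / \<delta> < real M + 1" using M by simp
    then have "1 < (real M + 1) * \<delta>" using \<delta> by (simp add: pos_divide_less_eq)
    then have "1 / (real M + 1) < \<delta>" by (simp add: pos_divide_less_eq mult.commute)
    moreover have "M' * (y - \<theta>) \<le> real M * (y - \<theta>)" using M y(1) by (intro mult_right_mono) auto
    then have "M' * (y - \<theta>) < \<bar>w y - w \<theta>\<bar>" using y(3) by linarith
    ultimately show "\<exists>y. \<theta> < y \<and> y < \<theta> + \<delta> \<and> M' * (y - \<theta>) < \<bar>w y - w \<theta>\<bar>"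
      using y by (intro exI[of _ y]) auto
  qed
qed

lemma classZ_iff:
  assumes "continuous_on (sphere 0 1) f"
  shows "classZ f \<longleftrightarrow> (\<forall>\<theta>. Zpt (\<lambda>y. Re (f (exp (\<i> * of_real y)))) \<theta> \<and> Zpt (\<lambda>y. Im (f (exp (\<i> * of_real y)))) \<theta>)"
  unfolding classZ_def
  using assms Limsup_Zpt[where w="\<lambda>y. Re (f (exp (\<i> * of_real y)))"] Limsup_Zpt[where w="\<lambda>y. Im (f (exp (\<i> * of_real y)))"]
  by simp


lemma exp_per: "exp (\<i> * of_real (t + 2 * pi * of_int k)) = exp (\<i> * of_real t)"
proof -
  have "cis (t + 2 * pi * of_int k) = cis t"
    by (simp add: complex_eq_iff cos_add sin_add)
  then show ?thesis by (simp add: cis_conv_exp)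
qed

lemma margin:
  fixes w :: "real \<Rightarrow> real"
  assumes cw: "continuous_on UNIV w"
    and per: "\<And>t k. w (t + 2 * pi * of_int k) = w t"
    and H: "\<And>\<theta>. \<exists>y. \<theta> < y \<and> y < \<theta> + \<delta> \<and> M * (y - \<theta>) < \<bar>w y - w \<theta>\<bar>"
  shows "\<exists>m>0. \<forall>\<theta>. \<exists>y. \<theta> < y \<and> y < \<theta> + \<delta> \<and> M * (y - \<theta>) + m < \<bar>w y - w \<theta>\<bar>"
proof -
  define Ob where "Ob = (\<lambda>(y, j::nat). {t. t < y \<and> y < t + \<delta> \<and> M * (y - t) + 1 / (real j + 1) < \<bar>w y - w t\<bar>})"
  have opn: "open (Ob c)" for c
  proof -
    obtain y j where c: "c = (y, j)" by (cases c)
    have cwt: "continuous_on UNIV (\<lambda>t. w t)" using cw by simp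
    have c1: "continuous_on UNIV (\<lambda>t. M * (y - t) + 1 / (real j + 1))" by (intro continuous_intros)
    have c2: "continuous_on UNIV (\<lambda>t. \<bar>w y - w t\<bar>)"
      by (intro continuous_on_rabs continuous_on_diff continuous_on_const cwt)
    have o1: "open {t. t < y}" by (rule open_Collect_less) (intro continuous_intros)+
    have o2: "open {t. y < t + \<delta>}" by (rule open_Collect_less) (intro continuous_intros)+
    have o3: "open {t. M * (y - t) + 1 / (real j + 1) < \<bar>w y - w t\<bar>}" by (rule open_Collect_less[OF c1 c2])
    have "open {t. t < y \<and> y < t + \<delta> \<and> M * (y - t) + 1 / (real j + 1) < \<bar>w y - w t\<bar>}"
      by (rule open_Collect_conj[OF o1 open_Collect_conj[OF o2 o3]])
    then show ?thesis unfolding Ob_def c by simp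
  qed
  have cov: "{0..2*pi} \<subseteq> (\<Union>c\<in>UNIV. Ob c)"
  proof
    fix t assume "t \<in> {0..2*pi}"
    obtain y where y: "t < y" "y < t + \<delta>" "M * (y - t) < \<bar>w y - w t\<bar>" using H by blast
    obtain j where j: "inverse (real (Suc j)) < \<bar>w y - w t\<bar> - M * (y - t)"
      using reals_Archimedean[of "\<bar>w y - w t\<bar> - M * (y - t)"] y(3) by auto
    have "1 / (real j + 1) = inverse (real (Suc j))" by (simp add: inverse_eq_divide)
    then have "M * (y - t) + 1 / (real j + 1) < \<bar>w y - w t\<bar>" using j by linarith
    then have "t \<in> Ob (y, j)" unfolding Ob_def using y by simp
    then show "t \<in> (\<Union>c\<in>UNIV. Ob c)" by blast
  qed
  obtain C' where C': "C' \<subseteq> UNIV" "finite C'" "{0..2*pi} \<subseteq> (\<Union>c\<in>C'. Ob c)"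
    by (rule compactE_image[OF compact_Icc opn cov])
  define J where "J = Max (insert 0 (snd ` C'))"
  have J: "j \<le> J" if "(y, j) \<in> C'" for y j
  proof -
    have "j \<in> snd ` C'" using that by (rule rev_image_eqI) simp
    then show ?thesis unfolding J_def using C'(2) by (intro Max_ge) auto
  qed
  define m where "m = 1 / (real J + 1)"
  have m0: "m > 0" unfolding m_def by simp
  have base: "\<exists>y. t < y \<and> y < t + \<delta> \<and> M * (y - t) + m < \<bar>w y - w t\<bar>" if t: "t \<in> {0..2*pi}" for t
  proof -
    obtain c where c: "c \<in> C'" "t \<in> Ob c" using C'(3) t by blast
    obtain y j where cyj: "c = (y, j)" by (cases c)
    have yj: "(y, j) \<in> C'" "t \<in> Ob (y, j)" using c cyj by auto
    have "real j + 1 \<le> real J + 1" using J[OF yj(1)] by simp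
    then have "m \<le> 1 / (real j + 1)" unfolding m_def by (intro divide_left_mono) auto
    then show ?thesis using yj(2) unfolding Ob_def by (intro exI[of _ y]) auto
  qed
  show ?thesis
  proof (rule exI[of _ m], rule conjI)
    show "m > 0" by (rule m0)
    show "\<forall>\<theta>. \<exists>y. \<theta> < y \<and> y < \<theta> + \<delta> \<and> M * (y - \<theta>) + m < \<bar>w y - w \<theta>\<bar>"
    proof
    fix \<theta> :: real
    define k where "k = \<lfloor>\<theta> / (2 * pi)\<rfloor>"
    define t where "t = \<theta> - 2 * pi * of_int k"
    have "of_int k \<le> \<theta> / (2 * pi)" unfolding k_def by simp
    then have t0: "0 \<le> t" unfolding t_def by (simp add: le_divide_eq mult.commute)
    have "\<theta> / (2 * pi) < of_int k + 1" unfolding k_def by simp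
    then have t1: "t \<le> 2 * pi" unfolding t_def by (simp add: divide_less_eq algebra_simps)
    obtain y where y: "t < y" "y < t + \<delta>" "M * (y - t) + m < \<bar>w y - w t\<bar>"
      using base[of t] t0 t1 by auto
    have th: "\<theta> = t + 2 * pi * of_int k" unfolding t_def by simp
    show "\<exists>y. \<theta> < y \<and> y < \<theta> + \<delta> \<and> M * (y - \<theta>) + m < \<bar>w y - w \<theta>\<bar>"
    proof (intro exI[of _ "y + 2 * pi * of_int k"] conjI)
      show "\<theta> < y + 2 * pi * of_int k" using y th by simp
      show "y + 2 * pi * of_int k < \<theta> + \<delta>" using y th by simp
      show "M * (y + 2 * pi * of_int k - \<theta>) + m < \<bar>w (y + 2 * pi * of_int k) - w \<theta>\<bar>"
        using y unfolding th per by simp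
    qed
    qed
  qed
qed

lemma abs3: "\<bar>u - v\<bar> \<le> \<bar>a - b\<bar> + \<bar>a - u\<bar> + \<bar>b - v\<bar>" for u v a b :: real
  by arith

lemma Bset_open:
  fixes P :: "complex \<Rightarrow> real"
  assumes Pc: "continuous_on UNIV P" and Pl: "\<And>a b. \<bar>P a - P b\<bar> \<le> norm (a - b)"
  shows "cc_open {f\<in>A0. \<forall>\<theta>. \<exists>y. \<theta> < y \<and> y < \<theta> + \<delta> \<and>
     M * (y - \<theta>) < \<bar>P (f (exp (\<i> * of_real y))) - P (f (exp (\<i> * of_real \<theta>)))\<bar>}"
  (is "cc_open ?B")
  unfolding cc_open_def
proof (intro conjI ballI)
  show "?B \<subseteq> A0" by blast
  fix f assume f: "f \<in> ?B"
  define w where "w t = P (f (exp (\<i> * of_real t)))" for t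
  have fc: "continuous_on (sphere 0 1) f"
    using f unfolding A0_def by (auto intro: continuous_on_subset)
  have "continuous_on UNIV (\<lambda>t::real. f (exp (\<i> * of_real t)))"
    by (rule continuous_on_compose2[OF fc]) (auto intro!: continuous_intros)
  then have cw: "continuous_on UNIV w"
    unfolding w_def by (rule continuous_on_compose2[OF Pc]) auto
  have per: "w (t + 2 * pi * of_int k) = w t" for t k unfolding w_def by (simp only: exp_per)
  obtain m where m: "m > 0" "\<And>\<theta>. \<exists>y. \<theta> < y \<and> y < \<theta> + \<delta> \<and> M * (y - \<theta>) + m < \<bar>w y - w \<theta>\<bar>"
    using margin[OF cw per, of \<delta> M] f unfolding w_def by blast
  show "\<exists>K e. compact K \<and> K \<subseteq> {z. 1 \<le> norm z} \<and> e > 0 \<and> {g\<in>A0. \<forall>z\<in>K. norm (g z - f z) < e} \<subseteq> ?B"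
  proof (intro exI conjI)
    show "compact (sphere (0::complex) 1)" by simp
    show "sphere (0::complex) 1 \<subseteq> {z. 1 \<le> norm z}" by auto
    show "m / 3 > 0" using m by simp
    show "{g\<in>A0. \<forall>z\<in>sphere 0 1. norm (g z - f z) < m / 3} \<subseteq> ?B"
    proof (intro subsetI CollectI conjI allI)
      fix g assume g: "g \<in> {g\<in>A0. \<forall>z\<in>sphere 0 1. norm (g z - f z) < m / 3}"
      then show "g \<in> A0" by simp
      have gt: "\<bar>P (g (exp (\<i> * of_real t))) - w t\<bar> < m / 3" for t
      proof -
        have "exp (\<i> * of_real t) \<in> sphere 0 1" by simp
        then have "norm (g (exp (\<i> * of_real t)) - f (exp (\<i> * of_real t))) < m / 3" using g by blast
        then show ?thesis unfolding w_def by (rule order_le_less_trans[OF Pl])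
      qed
      fix \<theta> :: real
      obtain y where y: "\<theta> < y" "y < \<theta> + \<delta>" "M * (y - \<theta>) + m < \<bar>w y - w \<theta>\<bar>" using m(2) by blast
      have "M * (y - \<theta>) < \<bar>P (g (exp (\<i> * of_real y))) - P (g (exp (\<i> * of_real \<theta>)))\<bar>"
        using y(3) gt[of y] gt[of \<theta>] m(1) abs3[of "w y" "w \<theta>" "P (g (exp (\<i> * of_real y)))" "P (g (exp (\<i> * of_real \<theta>)))"]
        by linarith
      then show "\<exists>y. \<theta> < y \<and> y < \<theta> + \<delta> \<and> M * (y - \<theta>) < \<bar>P (g (exp (\<i> * of_real y))) - P (g (exp (\<i> * of_real \<theta>)))\<bar>"
        using y by blast
    qed
  qed
qed


lemma Zpt_dil:
  fixes P :: "complex \<Rightarrow> real"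
  assumes f: "f \<in> A0" and r: "1 < r" and c: "c > 0"
    and PZ: "Zpt (\<lambda>y. P (hZ (exp (\<i> * of_real y)))) \<theta>"
    and Pl: "\<And>a. \<bar>P a\<bar> \<le> norm a"
    and Padd: "\<And>a b. P (a + b) = P a + P b" and Pdiff: "\<And>a b. P (a - b) = P a - P b"
    and Psc: "\<And>a. P (of_real c * a) = c * P a"
  shows "Zpt (\<lambda>y. P ((\<lambda>z. (if norm z < 1 then 0 else f (of_real r * z)) + of_real c * hZ z) (exp (\<i> * of_real y)))) \<theta>"
proof -
  define F where "F = f \<circ> (\<lambda>x. of_real r * exp (\<i> * x))"
  have fh: "f holomorphic_on {z. 1 < norm z}" using f unfolding A0_def by auto
  have opT: "open {z::complex. 1 < norm z}" by (intro open_Collect_less continuous_intros)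
  have inner: "(\<lambda>x. of_real r * exp (\<i> * x)) field_differentiable at (of_real \<theta>)"
    by (rule holomorphic_on_imp_differentiable_at[of _ UNIV]) (auto intro!: holomorphic_intros)
  have "norm (of_real r * exp (\<i> * of_real \<theta>)) = r" using r by (simp add: norm_mult)
  then have "f field_differentiable at (of_real r * exp (\<i> * of_real \<theta>))"
    using r by (intro holomorphic_on_imp_differentiable_at[OF fh opT]) simp
  then have "F field_differentiable at (of_real \<theta>)"
    unfolding F_def by (rule field_differentiable_compose[OF inner])
  then obtain C d where Cd: "d > 0" "\<And>y. \<bar>y - \<theta>\<bar> < d \<Longrightarrow> norm (F (of_real y) - F (of_real \<theta>)) \<le> C * \<bar>y - \<theta>\<bar>"
    using loc_lip by blast
  define v where "v y = P (f (of_real r * exp (\<i> * of_real y)))" for y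
  have vl: "\<bar>v y - v \<theta>\<bar> \<le> C * \<bar>y - \<theta>\<bar>" if "\<bar>y - \<theta>\<bar> < d" for y
  proof -
    have "\<bar>v y - v \<theta>\<bar> = \<bar>P (F (of_real y) - F (of_real \<theta>))\<bar>" unfolding v_def F_def by (simp add: Pdiff)
    also have "\<dots> \<le> norm (F (of_real y) - F (of_real \<theta>))" by (rule Pl)
    also have "\<dots> \<le> C * \<bar>y - \<theta>\<bar>" by (rule Cd(2)[OF that])
    finally show ?thesis .
  qed
  have Z: "Zpt (\<lambda>y. v y + c * P (hZ (exp (\<i> * of_real y)))) \<theta>"
    by (rule Zpt_perturb[OF PZ c Cd(1) vl])
  have eq: "(\<lambda>y. P ((\<lambda>z. (if norm z < 1 then 0 else f (of_real r * z)) + of_real c * hZ z) (exp (\<i> * of_real y))))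
      = (\<lambda>y. v y + c * P (hZ (exp (\<i> * of_real y))))"
    by (rule ext) (simp add: v_def Padd Psc)
  show ?thesis unfolding eq by (rule Z)
qed

lemma approx:
  assumes f: "f \<in> A0" and K: "compact K" "K \<subseteq> {z. 1 \<le> norm z}" and e: "e > 0"
  shows "\<exists>g\<in>A0. classZ g \<and> (\<forall>z\<in>K. norm (g z - f z) < e)"
proof -
  let ?S = "{z::complex. 1 \<le> norm z}"
  define K' where "K' = (\<lambda>p. complex_of_real (fst p) * snd p) ` ({1..2} \<times> K)"
  have cK': "compact K'" unfolding K'_def
    by (intro compact_continuous_image compact_Times compact_Icc K(1)) (intro continuous_intros)
  have K'S: "K' \<subseteq> ?S"
  proof
    fix w assume "w \<in> K'"
    then obtain s z where sz: "s \<in> {1..2}" "z \<in> K" "w = of_real s * z" unfolding K'_def by auto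
    have "1 * 1 \<le> s * norm z" using sz K(2) by (intro mult_mono) auto
    then show "w \<in> ?S" using sz by (simp add: norm_mult)
  qed
  have KK': "of_real s * z \<in> K'" if "s \<in> {1..2}" "z \<in> K" for s z
    unfolding K'_def using that by (intro image_eqI[of _ _ "(s, z)"]) auto
  have fc: "continuous_on ?S f" using f unfolding A0_def by auto
  have "uniformly_continuous_on K' f"
    by (rule compact_uniformly_continuous[OF continuous_on_subset[OF fc K'S] cK'])
  then obtain d where d: "d > 0" "\<And>x x'. x \<in> K' \<Longrightarrow> x' \<in> K' \<Longrightarrow> dist x' x < d \<Longrightarrow> dist (f x') (f x) < e / 2"
    unfolding uniformly_continuous_on_def using e by (metis half_gt_zero)
  obtain B where B: "B > 0" "\<And>z. z \<in> K \<Longrightarrow> norm z \<le> B"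
    using compact_imp_bounded[OF K(1)] unfolding bounded_pos by blast
  define r where "r = 1 + min 1 (d / (2 * B))"
  have r1: "1 < r" unfolding r_def using d(1) B(1) by simp
  have r2: "r \<le> 2" unfolding r_def by simp
  have rB: "(r - 1) * B \<le> d / 2"
  proof -
    have "(r - 1) * B \<le> (d / (2 * B)) * B" unfolding r_def using B(1) by (intro mult_right_mono) auto
    also have "\<dots> = d / 2" using B(1) by simp
    finally show ?thesis .
  qed
  define c where "c = e / 4"
  have c0: "c > 0" unfolding c_def using e by simp
  define g where "g = (\<lambda>z. (if norm z < 1 then 0 else f (of_real r * z)) + of_real c * hZ z)"
  have gA: "g \<in> A0" unfolding g_def
    by (rule A0_comb[OF A0_dilate[OF f] hZ_A0]) (use r1 in simp)
  have close: "norm (g z - f z) < e" if z: "z \<in> K" for z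
  proof -
    have z1: "1 \<le> norm z" using z K(2) by auto
    have "dist (of_real r * z) z = (r - 1) * norm z"
    proof -
      have e1: "of_real r * z - z = complex_of_real (r - 1) * z" by (simp add: algebra_simps)
      have n: "norm (complex_of_real (r - 1)) = r - 1" using r1 by (simp only: norm_of_real)
      show ?thesis by (simp only: dist_norm e1 norm_mult n)
    qed
    also have "\<dots> \<le> (r - 1) * B" using r1 B(2)[OF z] by (intro mult_left_mono) auto
    also have "\<dots> < d" using rB d(1) by simp
    finally have "dist (of_real r * z) z < d" .
    then have "dist (f (of_real r * z)) (f z) < e / 2"
      using d(2)[OF KK'[of 1 z] KK'[of r z]] z r1 r2 by simp
    then have n1: "norm (f (of_real r * z) - f z) < e / 2" by (simp add: dist_norm)
    have ni: "norm (inverse z) \<le> 1" using z1 by (simp add: norm_inverse inverse_le_1_iff)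
    have "norm (hZ z) = norm (Pser (inverse z))" using z1 by (simp add: hZ_def)
    also have "\<dots> \<le> 4/3 * norm (inverse z)" by (rule Pser_bound[OF ni])
    also have "\<dots> \<le> 4/3" using ni by simp
    finally have n2: "norm (hZ z) \<le> 4/3" .
    have "norm (of_real c * hZ z) \<le> c * (4/3)" using n2 c0 by (simp add: norm_mult mult_left_mono)
    also have "\<dots> < e / 2" unfolding c_def using e by simp
    finally have n3: "norm (of_real c * hZ z) < e / 2" .
    have "g z - f z = (f (of_real r * z) - f z) + of_real c * hZ z" unfolding g_def using z1 by simp
    then have "norm (g z - f z) \<le> norm (f (of_real r * z) - f z) + norm (of_real c * hZ z)"
      by (metis norm_triangle_ineq)
    then show ?thesis using n1 n3 by simp
  qed
  have gc: "continuous_on (sphere 0 1) g"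
    using gA unfolding A0_def by (auto intro: continuous_on_subset)
  have "classZ g"
    unfolding classZ_iff[OF gc]
  proof
    fix \<theta> :: real
    show "Zpt (\<lambda>y. Re (g (exp (\<i> * of_real y)))) \<theta> \<and> Zpt (\<lambda>y. Im (g (exp (\<i> * of_real y)))) \<theta>"
    proof
      show "Zpt (\<lambda>y. Re (g (exp (\<i> * of_real y)))) \<theta>"
        unfolding g_def
        by (rule Zpt_dil[OF f r1 c0 hZ_Zpt_Re]) (auto simp: abs_Re_le_cmod)
      show "Zpt (\<lambda>y. Im (g (exp (\<i> * of_real y)))) \<theta>"
        unfolding g_def
        by (rule Zpt_dil[OF f r1 c0 hZ_Zpt_Im]) (auto simp: abs_Im_le_cmod)
    qed
  qed
  then show ?thesis using gA close by blast
qed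


lemma cc_open_A0: "cc_open A0"
  unfolding cc_open_def
  by (intro conjI ballI subset_refl exI[of _ "{}"] exI[of _ "1::real"]) auto

lemma top_cc: "topspace cc_topology = A0"
proof
  show "topspace cc_topology \<subseteq> A0"
    unfolding topspace_def openin_cc_topology cc_open_def by blast
  show "A0 \<subseteq> topspace cc_topology"
    using cc_open_A0 openin_subset[of cc_topology A0] unfolding openin_cc_topology by blast
qed

definition Bs :: "(complex \<Rightarrow> real) \<Rightarrow> nat \<Rightarrow> (complex \<Rightarrow> complex) set" where
  "Bs P M = {f\<in>A0. \<forall>\<theta>. \<exists>y. \<theta> < y \<and> y < \<theta> + 1 / (real M + 1) \<and>
     real M * (y - \<theta>) < \<bar>P (f (exp (\<i> * of_real y))) - P (f (exp (\<i> * of_real \<theta>)))\<bar>}"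

lemma Bs_open_Re: "openin cc_topology (Bs Re M)"
  unfolding openin_cc_topology Bs_def
proof (rule Bset_open)
  show "continuous_on UNIV Re" using continuous_on_Re[OF continuous_on_id] by simp
  show "\<bar>Re a - Re b\<bar> \<le> norm (a - b)" for a b using abs_Re_le_cmod[of "a - b"] by simp
qed

lemma Bs_open_Im: "openin cc_topology (Bs Im M)"
  unfolding openin_cc_topology Bs_def
proof (rule Bset_open)
  show "continuous_on UNIV Im" using continuous_on_Im[OF continuous_on_id] by simp
  show "\<bar>Im a - Im b\<bar> \<le> norm (a - b)" for a b using abs_Im_le_cmod[of "a - b"] by simp
qed

lemma Z_eq: "{f \<in> A0. classZ f} = \<Inter> (range (\<lambda>M. Bs Re M \<inter> Bs Im M))"
proof (intro equalityI subsetI)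
  fix f assume f: "f \<in> {f \<in> A0. classZ f}"
  then have fA: "f \<in> A0" by simp
  have fc: "continuous_on (sphere 0 1) f" using fA unfolding A0_def by (auto intro: continuous_on_subset)
  have "\<forall>\<theta>. Zpt (\<lambda>y. Re (f (exp (\<i> * of_real y)))) \<theta> \<and> Zpt (\<lambda>y. Im (f (exp (\<i> * of_real y)))) \<theta>"
    using f classZ_iff[OF fc] by simp
  then show "f \<in> \<Inter> (range (\<lambda>M. Bs Re M \<inter> Bs Im M))"
    using fA unfolding Bs_def Zpt_nat by blast
next
  fix f assume f: "f \<in> \<Inter> (range (\<lambda>M. Bs Re M \<inter> Bs Im M))"
  then have fA: "f \<in> A0" unfolding Bs_def by blast
  have fc: "continuous_on (sphere 0 1) f" using fA unfolding A0_def by (auto intro: continuous_on_subset)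
  have "\<forall>\<theta>. Zpt (\<lambda>y. Re (f (exp (\<i> * of_real y)))) \<theta> \<and> Zpt (\<lambda>y. Im (f (exp (\<i> * of_real y)))) \<theta>"
    using f unfolding Bs_def Zpt_nat by blast
  then show "f \<in> {f \<in> A0. classZ f}" using fA classZ_iff[OF fc] by simp
qed

theorem proposition2p4:
  shows "gdelta_in cc_topology {f \<in> A0. classZ f} \<and>
         cc_topology closure_of {f \<in> A0. classZ f} = topspace cc_topology"
proof
  show "gdelta_in cc_topology {f \<in> A0. classZ f}"
    unfolding Z_eq
  proof (rule gdelta_in_Inter)
    show "countable (range (\<lambda>M. Bs Re M \<inter> Bs Im M))" by simp
    show "range (\<lambda>M. Bs Re M \<inter> Bs Im M) \<noteq> {}" by simp
    fix S assume "S \<in> range (\<lambda>M. Bs Re M \<inter> Bs Im M)"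
    then obtain M where "S = Bs Re M \<inter> Bs Im M" by blast
    then show "gdelta_in cc_topology S"
      using open_imp_gdelta_in openin_Int Bs_open_Re Bs_open_Im by metis
  qed
  show "cc_topology closure_of {f \<in> A0. classZ f} = topspace cc_topology"
  proof
    show "cc_topology closure_of {f \<in> A0. classZ f} \<subseteq> topspace cc_topology"
      by (rule closure_of_subset_topspace)
    show "topspace cc_topology \<subseteq> cc_topology closure_of {f \<in> A0. classZ f}"
    proof
      fix f assume fT: "f \<in> topspace cc_topology"
      then have fA: "f \<in> A0" using top_cc by simp
      show "f \<in> cc_topology closure_of {f \<in> A0. classZ f}"
        unfolding in_closure_of
      proof (intro conjI allI impI)
        show "f \<in> topspace cc_topology" by (rule fT)
        fix T assume T: "f \<in> T \<and> openin cc_topology T"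
        then obtain K e where Ke: "compact K" "K \<subseteq> {z. 1 \<le> norm z}" "e > 0"
          "{g\<in>A0. \<forall>z\<in>K. norm (g z - f z) < e} \<subseteq> T"
          unfolding openin_cc_topology cc_open_def by blast
        obtain g where g: "g \<in> A0" "classZ g" "\<forall>z\<in>K. norm (g z - f z) < e"
          using approx[OF fA Ke(1,2,3)] by blast
        then have "g \<in> T" using Ke(4) by blast
        then show "\<exists>y. y \<in> {f \<in> A0. classZ f} \<and> y \<in> T" using g by blast
      qed
    qed
  qed
qed

end
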